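(* Consider an affine IFS with attractor $X$ and invariant measure $\mu$, and suppose the fixed point condition holds for some $k\in\mathbb{N}$ and $\tau\in\mathcal{A}_k$. Then there exist $n_0\in\mathbb{N}$ and a constant $C$ independent of $n$ such that $$\mu(\tau^n(X))=C\,p_\tau^n\quad\text{for all }n\ge n_0,$$ where $\tau^n$ denotes the $n$-fold composition of $\tau$.
   Context: Affine IFS: $R$ real $d\times d$ expansive matrix, $\mathcal{B}=\{b_1,\dots,b_N\}\subset\mathbb{R}^d$, weights $p_{b_i}>0$ summing to $1$, $\tau_{b_i}(x)=R^{-1}(x+b_i)$, attractor $X=\bigcup_i\tau_{b_i}(X)$, invariant measure $\mu=\sum_ip_{b_i}\mu\circ\tau_{b_i}^{-1}$. For a word $I=i_1\cdots i_n\in\{1,\dots,N\}^n$ let $\tau_I=\tau_{b_{i_1}}\circ\cdots\circ\tau_{b_{i_n}}$ and $p_I=p_{b_{i_1}}\cdots p_{b_{i_n}}$. $\mathcal{A}_n$ is the set of distinct maps among $\{\tau_I: I\in\{1,\dots,N\}^n\}$ (words giving the same map are identified), and for $\tau\in\mathcal{A}_n$, $p_\tau=\sum\{p_I:\tau_I=\tau\}$; thus $\mu=\sum_{\tau\in\mathcal{A}_n}p_\tau\mu\circ\tau^{-1}$. For $\tau\in\mathcal{A}_n$, $x_\tau$ denotes its fixed point. Fixed point condition (for $k$ and $\tau\in\mathcal{A}_k$): $x_\tau\notin\tilde\tau(X)$ for every $\tilde\tau\in\mathcal{A}_k$ with $\tilde\tau\ne\tau$. *)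

theory Defs
  imports "HOL-Analysis.Analysis" "HOL-Probability.Probability"
begin

text \<open>Affine IFS in R^d, d = CARD('n). The contraction tau_b(x) = R^{-1}(x + b).\<close>
definition ifs_map :: "real^'n^'n \<Rightarrow> real^'n \<Rightarrow> real^'n \<Rightarrow> real^'n" where
  "ifs_map R b x = matrix_inv R *v (x + b)"

text \<open>Expansive: every complex eigenvalue of R has modulus > 1.\<close>
definition expansive :: "real^'n^'n \<Rightarrow> bool" where
  "expansive R \<longleftrightarrow> (\<forall>lam::complex.
     det (\<chi> i j. complex_of_real (R$i$j) - (if i = j then lam else 0)) = 0 \<longrightarrow> 1 < cmod lam)"

text \<open>Words of length n over the digit set B (a word is a list of digits b_{i_1} ... b_{i_n}).\<close>
definition words :: "'a set \<Rightarrow> nat \<Rightarrow> 'a list set" where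
  "words B n = {w. set w \<subseteq> B \<and> length w = n}"

text \<open>tau_I = tau_{b_{i_1}} o ... o tau_{b_{i_n}}\<close>
definition word_map :: "real^'n^'n \<Rightarrow> (real^'n) list \<Rightarrow> real^'n \<Rightarrow> real^'n" where
  "word_map R w = foldr (\<lambda>b f. ifs_map R b \<circ> f) w id"

text \<open>p_I = p_{b_{i_1}} ... p_{b_{i_n}}\<close>
definition word_weight :: "('a \<Rightarrow> real) \<Rightarrow> 'a list \<Rightarrow> real" where
  "word_weight p w = prod_list (map p w)"

text \<open>A_n: the set of distinct maps tau_I with |I| = n.\<close>
definition maps_level :: "real^'n^'n \<Rightarrow> (real^'n) set \<Rightarrow> nat \<Rightarrow> (real^'n \<Rightarrow> real^'n) set" where
  "maps_level R B n = word_map R ` words B n"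

text \<open>p_tau for tau in A_n: sum of p_I over all words I of length n with tau_I = tau.\<close>
definition map_weight :: "real^'n^'n \<Rightarrow> (real^'n) set \<Rightarrow> (real^'n \<Rightarrow> real) \<Rightarrow> nat
    \<Rightarrow> (real^'n \<Rightarrow> real^'n) \<Rightarrow> real" where
  "map_weight R B p n tau = (\<Sum>w\<in>{w \<in> words B n. word_map R w = tau}. word_weight p w)"

text \<open>Attractor: nonempty compact X with X = union of tau_b(X).\<close>
definition is_attractor :: "real^'n^'n \<Rightarrow> (real^'n) set \<Rightarrow> (real^'n) set \<Rightarrow> bool" where
  "is_attractor R B X \<longleftrightarrow> X \<noteq> {} \<and> compact X \<and> X = (\<Union>b\<in>B. ifs_map R b ` X)"

text \<open>Invariant measure: Borel probability measure with mu = sum_b p_b mu o tau_b^{-1}.\<close>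
definition is_invariant_measure :: "real^'n^'n \<Rightarrow> (real^'n) set \<Rightarrow> (real^'n \<Rightarrow> real)
    \<Rightarrow> (real^'n) measure \<Rightarrow> bool" where
  "is_invariant_measure R B p \<mu> \<longleftrightarrow> prob_space \<mu> \<and> sets \<mu> = sets borel \<and>
     (\<forall>A\<in>sets borel. measure \<mu> A = (\<Sum>b\<in>B. p b * measure \<mu> (ifs_map R b -` A)))"

text \<open>x_tau: the (unique) fixed point of tau.\<close>
definition fixed_point :: "('a \<Rightarrow> 'a) \<Rightarrow> 'a" where
  "fixed_point f = (THE x. f x = x)"

text \<open>Fixed point condition for k and tau in A_k.\<close>
definition fixed_point_condition :: "real^'n^'n \<Rightarrow> (real^'n) set \<Rightarrow> (real^'n) set \<Rightarrow> nat
    \<Rightarrow> (real^'n \<Rightarrow> real^'n) \<Rightarrow> bool" where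
  "fixed_point_condition R B X k tau \<longleftrightarrow>
     (\<forall>tau'\<in>maps_level R B k. tau' \<noteq> tau \<longrightarrow> fixed_point tau \<notin> tau' ` X)"

end

theory Submission
  imports Defs "Jordan_Normal_Form.Spectral_Radius"
begin

lemma smult_pow_mat_jnf:
  assumes "(M :: complex mat) \<in> carrier_mat n n"
  shows "(a \<cdot>\<^sub>m M) ^\<^sub>m k = (a ^ k) \<cdot>\<^sub>m (M ^\<^sub>m k)"
proof (induction k)
  case 0
  then show ?case by (auto intro!: eq_matI)
next
  case (Suc k)
  have "(a \<cdot>\<^sub>m M) ^\<^sub>m Suc k = ((a ^ k) \<cdot>\<^sub>m (M ^\<^sub>m k)) * (a \<cdot>\<^sub>m M)" using Suc by simp
  also have "\<dots> = (a ^ Suc k) \<cdot>\<^sub>m (M ^\<^sub>m Suc k)"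
  proof -
    have P: "M ^\<^sub>m k \<in> carrier_mat n n" using assms by simp
    have "((a ^ k) \<cdot>\<^sub>m (M ^\<^sub>m k)) * (a \<cdot>\<^sub>m M) = (a ^ k) \<cdot>\<^sub>m ((M ^\<^sub>m k) * (a \<cdot>\<^sub>m M))"
      using P assms by (intro mult_smult_assoc_mat[of _ n n _ n]) auto
    also have "\<dots> = (a ^ k) \<cdot>\<^sub>m (a \<cdot>\<^sub>m ((M ^\<^sub>m k) * M))"
      using P assms by (subst mult_smult_distrib[of _ n n _ n]) auto
    also have "\<dots> = (a ^ Suc k) \<cdot>\<^sub>m (M ^\<^sub>m Suc k)"
      using P assms by (intro eq_matI) auto
    finally show ?thesis .
  qed
  finally show ?case .
qed

lemma jnf_power_decay:
  fixes M :: "complex mat"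
  assumes M: "M \<in> carrier_mat n n" and n: "n > 0"
    and ev: "\<And>l v. v \<in> carrier_vec n \<Longrightarrow> v \<noteq> 0\<^sub>v n \<Longrightarrow> M *\<^sub>v v = l \<cdot>\<^sub>v v \<Longrightarrow> norm l < 1"
  shows "\<exists>\<rho> c. 0 < \<rho> \<and> \<rho> < 1 \<and> (\<forall>k i j. i < n \<longrightarrow> j < n \<longrightarrow> norm ((M ^\<^sub>m k) $$ (i,j)) \<le> c * \<rho> ^ k)"
proof -
  define s where "s = spectral_radius M"
  have smem: "s \<in> norm ` spectrum M" using spectral_radius_mem_max(1)[OF M n] s_def by simp
  then obtain l where l: "eigenvalue M l" "s = norm l" unfolding spectrum_def by auto
  have s1: "s < 1" using l M unfolding eigenvalue_def eigenvector_def
    using ev by auto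
  have s0: "0 \<le> s" using l by simp
  define \<rho> where "\<rho> = (1 + s) / 2"
  have r: "0 < \<rho>" "\<rho> < 1" "s < \<rho>" using s0 s1 unfolding \<rho>_def by auto
  define A where "A = (1 / complex_of_real \<rho>) \<cdot>\<^sub>m M"
  have A: "A \<in> carrier_mat n n" using M A_def by simp
  have "spectral_radius A \<in> norm ` spectrum A" using spectral_radius_mem_max(1)[OF A n] .
  then obtain l' where l': "eigenvalue A l'" "spectral_radius A = norm l'" unfolding spectrum_def by auto
  then obtain v where v: "eigenvector A v l'" unfolding eigenvalue_def by auto
  have "M *\<^sub>v v = (complex_of_real \<rho> * l') \<cdot>\<^sub>v v"
  proof -
    have vc: "v \<in> carrier_vec n" using v A unfolding eigenvector_def by auto
    have "A *\<^sub>v v = l' \<cdot>\<^sub>v v" using v unfolding eigenvector_def by auto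
    hence "complex_of_real \<rho> \<cdot>\<^sub>v (A *\<^sub>v v) = complex_of_real \<rho> \<cdot>\<^sub>v (l' \<cdot>\<^sub>v v)" by simp
    moreover have "complex_of_real \<rho> \<cdot>\<^sub>v (A *\<^sub>v v) = M *\<^sub>v v"
      using vc M r unfolding A_def by (intro eq_vecI, auto simp: scalar_prod_def sum_distrib_left)
    moreover have "complex_of_real \<rho> \<cdot>\<^sub>v (l' \<cdot>\<^sub>v v) = (complex_of_real \<rho> * l') \<cdot>\<^sub>v v"
      using vc by (intro eq_vecI, auto)
    ultimately show ?thesis by simp
  qed
  hence "eigenvalue M (complex_of_real \<rho> * l')" using v A M unfolding eigenvalue_def eigenvector_def by auto
  hence "norm (complex_of_real \<rho> * l') \<le> s" unfolding s_def
    using spectral_radius_mem_max(2)[OF M n] unfolding spectrum_def by auto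
  hence "\<rho> * norm l' \<le> s" using r by (simp add: norm_mult)
  hence "norm l' < 1" using r s0
    by (smt (verit, ccfv_SIG) mult_le_cancel_left1 norm_ge_zero)
  hence "spectral_radius A < 1" using l' by simp
  from spectral_radius_jnf_norm_bound_less_1_upper_triangular[OF A this]
  obtain c where c: "\<And>k. norm_bound (A ^\<^sub>m k) c" by auto
  show ?thesis
  proof (intro exI conjI allI impI)
    fix k i j assume ij: "i < n" "j < n"
    have "A ^\<^sub>m k = ((1 / complex_of_real \<rho>) ^ k) \<cdot>\<^sub>m (M ^\<^sub>m k)"
      unfolding A_def using smult_pow_mat_jnf[OF M] by simp
    hence "norm ((A ^\<^sub>m k) $$ (i,j)) = norm ((M ^\<^sub>m k) $$ (i,j)) / \<rho> ^ k"
      using ij M r by (simp add: norm_mult norm_divide norm_power power_one_over)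
    moreover have "norm ((A ^\<^sub>m k) $$ (i,j)) \<le> c" using c[of k] ij A unfolding norm_bound_def by auto
    ultimately show "norm ((M ^\<^sub>m k) $$ (i,j)) \<le> c * \<rho> ^ k"
      using r by (simp add: divide_le_eq mult.commute)
  qed (use r in auto)
qed


lemma cvec_mult:
  fixes B :: "real^'n^'n" and e :: "nat \<Rightarrow> 'n"
  assumes e: "bij_betw e {..<CARD('n)} UNIV"
  shows "Matrix.mat CARD('n) CARD('n) (\<lambda>(i,j). complex_of_real (B $ e i $ e j)) *\<^sub>v
           Matrix.vec CARD('n) (\<lambda>j. complex_of_real (x $ e j))
         = Matrix.vec CARD('n) (\<lambda>j. complex_of_real ((B *v x) $ e j))"
proof (rule eq_vecI)
  fix i assume i: "i < dim_vec (Matrix.vec CARD('n) (\<lambda>j. complex_of_real ((B *v x) $ e j)))"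
  hence i': "i < CARD('n)" by simp
  have "(\<Sum>j<CARD('n). complex_of_real (B $ e i $ e j) * complex_of_real (x $ e j))
        = (\<Sum>b\<in>UNIV. complex_of_real (B $ e i $ b) * complex_of_real (x $ b))"
    by (rule sum.reindex_bij_betw[OF e])
  also have "\<dots> = complex_of_real ((B *v x) $ e i)"
    by (simp add: matrix_vector_mult_def)
  finally show "(Matrix.mat CARD('n) CARD('n) (\<lambda>(i,j). complex_of_real (B $ e i $ e j)) *\<^sub>v
           Matrix.vec CARD('n) (\<lambda>j. complex_of_real (x $ e j))) $ i
         = Matrix.vec CARD('n) (\<lambda>j. complex_of_real ((B *v x) $ e j)) $ i"
    using i' by (simp add: scalar_prod_def lessThan_atLeast0)
qed simp


lemma cvec_pow:
  fixes B :: "real^'n^'n" and e :: "nat \<Rightarrow> 'n"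
  assumes e: "bij_betw e {..<CARD('n)} UNIV"
  shows "(Matrix.mat CARD('n) CARD('n) (\<lambda>(i,j). complex_of_real (B $ e i $ e j)) ^\<^sub>m k) *\<^sub>v
           Matrix.vec CARD('n) (\<lambda>j. complex_of_real (x $ e j))
         = Matrix.vec CARD('n) (\<lambda>j. complex_of_real (((((*v) B) ^^ k) x) $ e j))"
proof (induction k arbitrary: x)
  case 0
  then show ?case by simp
next
  case (Suc k)
  define Bc where "Bc = Matrix.mat CARD('n) CARD('n) (\<lambda>(i,j). complex_of_real (B $ e i $ e j))"
  have Bc: "Bc \<in> carrier_mat CARD('n) CARD('n)" unfolding Bc_def by simp
  have "(Bc ^\<^sub>m Suc k) *\<^sub>v Matrix.vec CARD('n) (\<lambda>j. complex_of_real (x $ e j))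
     = (Bc ^\<^sub>m k) *\<^sub>v (Bc *\<^sub>v Matrix.vec CARD('n) (\<lambda>j. complex_of_real (x $ e j)))"
    using Bc by (simp add: assoc_mult_mat_vec[of _ "CARD('n)" "CARD('n)" _ "CARD('n)"])
  also have "\<dots> = (Bc ^\<^sub>m k) *\<^sub>v Matrix.vec CARD('n) (\<lambda>j. complex_of_real ((B *v x) $ e j))"
    unfolding Bc_def using cvec_mult[OF e] by simp
  also have "\<dots> = Matrix.vec CARD('n) (\<lambda>j. complex_of_real (((((*v) B) ^^ k) (B *v x)) $ e j))"
    unfolding Bc_def by (rule Suc.IH)
  also have "\<dots> = Matrix.vec CARD('n) (\<lambda>j. complex_of_real (((((*v) B) ^^ Suc k) x) $ e j))"
    by (simp add: funpow_Suc_right del: funpow.simps)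
  finally show ?case unfolding Bc_def .
qed

lemma pow_bound_transfer:
  fixes B :: "real^'n^'n" and e :: "nat \<Rightarrow> 'n"
  assumes e: "bij_betw e {..<CARD('n)} UNIV"
    and bnd: "\<And>i j. i < CARD('n) \<Longrightarrow> j < CARD('n) \<Longrightarrow>
       norm ((Matrix.mat CARD('n) CARD('n) (\<lambda>(i,j). complex_of_real (B $ e i $ e j)) ^\<^sub>m k) $$ (i,j)) \<le> b"
  shows "norm (((((*v) B) ^^ k) x)) \<le> real CARD('n) * real CARD('n) * b * norm x"
proof -
  define n where "n = CARD('n)"
  define Bc where "Bc = Matrix.mat n n (\<lambda>(i,j). complex_of_real (B $ e i $ e j))"
  define y where "y = ((((*v) B) ^^ k) x)"
  have Pk: "Bc ^\<^sub>m k \<in> carrier_mat n n" unfolding Bc_def by simp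
  hence dims: "dim_row (Bc ^\<^sub>m k) = n" "dim_col (Bc ^\<^sub>m k) = n" by auto
  have eq: "(Bc ^\<^sub>m k) *\<^sub>v Matrix.vec n (\<lambda>j. complex_of_real (x $ e j))
         = Matrix.vec n (\<lambda>j. complex_of_real (y $ e j))"
    unfolding Bc_def n_def y_def using cvec_pow[OF e] by simp
  have comp: "\<bar>y $ a\<bar> \<le> real n * b * norm x" for a
  proof -
    have "a \<in> e ` {..<n}" using e unfolding n_def bij_betw_def by simp
    then obtain i where i: "i < n" "e i = a" by auto
    have "complex_of_real (y $ a) = Matrix.vec n (\<lambda>j. complex_of_real (y $ e j)) $ i"
      using i by simp
    also have "\<dots> = ((Bc ^\<^sub>m k) *\<^sub>v Matrix.vec n (\<lambda>j. complex_of_real (x $ e j))) $ i"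
      using eq by simp
    also have "\<dots> = row (Bc ^\<^sub>m k) i \<bullet> Matrix.vec n (\<lambda>j. complex_of_real (x $ e j))"
      using i dims by simp
    also have "\<dots> = (\<Sum>j<n. (Bc ^\<^sub>m k) $$ (i,j) * complex_of_real (x $ e j))"
      unfolding scalar_prod_def lessThan_atLeast0 by (rule sum.cong) (use i dims in auto)
    finally have "\<bar>y $ a\<bar> = norm (\<Sum>j<n. (Bc ^\<^sub>m k) $$ (i,j) * complex_of_real (x $ e j))"
      by (metis norm_of_real)
    also have "\<dots> \<le> (\<Sum>j<n. norm ((Bc ^\<^sub>m k) $$ (i,j) * complex_of_real (x $ e j)))"
      by (rule norm_sum)
    also have "\<dots> \<le> (\<Sum>j<n. b * norm x)"
    proof (rule sum_mono)
      fix j assume j: "j \<in> {..<n}"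
      have "norm ((Bc ^\<^sub>m k) $$ (i,j) * complex_of_real (x $ e j))
          = norm ((Bc ^\<^sub>m k) $$ (i,j)) * \<bar>x $ e j\<bar>" by (simp add: norm_mult)
      also have "\<dots> \<le> b * norm x"
        using bnd[of i j] i j unfolding n_def Bc_def
        by (intro mult_mono) (auto simp: component_le_norm_cart order_trans[OF norm_ge_zero])
      finally show "norm ((Bc ^\<^sub>m k) $$ (i,j) * complex_of_real (x $ e j)) \<le> b * norm x" .
    qed
    also have "\<dots> = real n * b * norm x" by simp
    finally show ?thesis .
  qed
  have "norm y \<le> (\<Sum>a\<in>UNIV. \<bar>y $ a\<bar>)" by (rule norm_le_l1_cart)
  also have "\<dots> \<le> (\<Sum>a\<in>(UNIV::'n set). real n * b * norm x)" by (rule sum_mono) (rule comp)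
  also have "\<dots> = real n * real n * b * norm x" by (simp add: n_def)
  finally show ?thesis unfolding y_def n_def .
qed

lemma cdet_kernel:
  fixes M :: "complex^'n^'n"
  assumes "M *v w = 0" "w \<noteq> 0"
  shows "Determinants.det M = 0"
proof -
  have "\<not> invertible M"
  proof
    assume "invertible M"
    then obtain A :: "complex^'n^'n" where A: "A ** M = Finite_Cartesian_Product.mat 1" unfolding invertible_def by blast
    have "w = A *v (M *v w)" by (simp add: matrix_vector_mul_assoc A)
    also have "\<dots> = 0" using assms(1) by simp
    finally show False using assms(2) by simp
  qed
  thus ?thesis using invertible_det_nz by blast
qed

lemma expansive_invertible:
  fixes R :: "real^'n^'n"
  assumes "expansive R"
  shows "invertible R"
proof -
  have "\<forall>x. R *v x = 0 \<longrightarrow> x = 0"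
  proof (intro allI impI, rule ccontr)
    fix x assume x: "R *v x = 0" "x \<noteq> 0"
    define Rc :: "complex^'n^'n" where "Rc = (\<chi> i j. complex_of_real (R$i$j))"
    define xc :: "complex^'n" where "xc = (\<chi> i. complex_of_real (x$i))"
    have "Rc *v xc = 0"
    proof -
      have "(Rc *v xc) $ i = complex_of_real ((R *v x) $ i)" for i
        by (simp add: Rc_def xc_def matrix_vector_mult_def)
      thus ?thesis using x by (simp add: Finite_Cartesian_Product.vec_eq_iff)
    qed
    moreover have "xc \<noteq> 0" using x by (auto simp: xc_def Finite_Cartesian_Product.vec_eq_iff)
    ultimately have "Determinants.det Rc = 0" by (rule cdet_kernel)
    moreover have "(\<chi> i j. complex_of_real (R$i$j) - (if i = j then (0::complex) else 0)) = Rc"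
      by (simp add: Rc_def)
    moreover have "Determinants.det (\<chi> i j. complex_of_real (R$i$j) - (if i = j then (0::complex) else 0)) = 0 \<longrightarrow> 1 < cmod (0::complex)"
      using assms unfolding expansive_def by blast
    ultimately show False by simp
  qed
  hence "\<exists>A::real^'n^'n. A ** R = Finite_Cartesian_Product.mat 1" by (subst matrix_left_invertible_ker)
  thus ?thesis by (subst invertible_left_inverse)
qed

lemma matrix_inv_props:
  fixes R :: "real^'n^'n"
  assumes "invertible R"
  shows "R ** matrix_inv R = Finite_Cartesian_Product.mat 1" "matrix_inv R ** R = Finite_Cartesian_Product.mat 1"
  using someI_ex[OF assms[unfolded invertible_def]] unfolding matrix_inv_def by auto

lemma eig_small:
  fixes R :: "real^'n^'n"
  assumes exp: "expansive R"
    and w: "(\<chi> i j. complex_of_real (matrix_inv R $ i $ j)) *v w = l *s w" "w \<noteq> 0"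
  shows "cmod l < 1"
proof -
  define B where "B = matrix_inv R"
  define Rc :: "complex^'n^'n" where "Rc = (\<chi> i j. complex_of_real (R$i$j))"
  define Bc :: "complex^'n^'n" where "Bc = (\<chi> i j. complex_of_real (B$i$j))"
  have RB: "R ** B = Finite_Cartesian_Product.mat 1" using matrix_inv_props[OF expansive_invertible[OF exp]] B_def by simp
  have "Rc ** Bc = Finite_Cartesian_Product.mat 1"
  proof -
    have "(Rc ** Bc) $ i $ j = complex_of_real ((R ** B) $ i $ j)" for i j
      by (simp add: Rc_def Bc_def matrix_matrix_mult_def)
    thus ?thesis using RB by (simp add: Finite_Cartesian_Product.vec_eq_iff Finite_Cartesian_Product.mat_def)
  qed
  hence RBw: "Rc *v (Bc *v w) = w" by (simp add: matrix_vector_mul_assoc)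
  have Bw: "Bc *v w = l *s w" using w B_def Bc_def by simp
  have l0: "l \<noteq> 0"
  proof
    assume "l = 0"
    hence "Bc *v w = 0" using Bw by simp
    hence "w = 0" using RBw by simp
    thus False using w by simp
  qed
  have comp: "l * (Rc *v w) $ i = w $ i" for i
  proof -
    have "(Rc *v (l *s w)) $ i = l * (Rc *v w) $ i"
      by (simp add: matrix_vector_mult_def sum_distrib_left mult.left_commute)
    thus ?thesis using RBw Bw by simp
  qed
  define M :: "complex^'n^'n" where "M = (\<chi> i j. complex_of_real (R$i$j) - (if i = j then 1/l else 0))"
  have "M *v w = 0"
  proof -
    have "(M *v w) $ i = (Rc *v w) $ i - w $ i / l" for i
      unfolding M_def Rc_def by (simp add: matrix_vector_mult_def left_diff_distrib sum_subtractf if_distrib[of "\<lambda>x. x * _"] cong: if_cong)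
    moreover have "(Rc *v w) $ i - w $ i / l = 0" for i using comp[of i] l0
      by (simp add: field_simps)
    ultimately show ?thesis by (simp add: Finite_Cartesian_Product.vec_eq_iff)
  qed
  hence "Determinants.det M = 0" using w by (intro cdet_kernel) auto
  hence "1 < cmod (1/l)" using exp unfolding expansive_def M_def by blast
  thus ?thesis using l0 by (simp add: norm_divide divide_less_eq)
qed

lemma contraction:
  fixes R :: "real^'n^'n"
  assumes exp: "expansive R"
  shows "\<exists>K \<rho>. 0 < K \<and> 0 < \<rho> \<and> \<rho> < 1 \<and>
          (\<forall>m x. norm ((((*v) (matrix_inv R)) ^^ m) x) \<le> K * \<rho> ^ m * norm x)"
proof -
  obtain e :: "nat \<Rightarrow> 'n" where e: "bij_betw e {..<CARD('n)} UNIV"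
    using ex_bij_betw_nat_finite[of "UNIV :: 'n set"] by (auto simp: lessThan_atLeast0)
  define n where "n = CARD('n)"
  define B where "B = matrix_inv R"
  define Bc where "Bc = Matrix.mat n n (\<lambda>(i,j). complex_of_real (B $ e i $ e j))"
  have Bc: "Bc \<in> carrier_mat n n" unfolding Bc_def by simp
  have n0: "0 < n" unfolding n_def by simp
  have ev: "cmod l < 1" if v: "v \<in> carrier_vec n" "v \<noteq> 0\<^sub>v n" "Bc *\<^sub>v v = l \<cdot>\<^sub>v v" for l v
  proof -
    define idx where "idx = inv_into {..<n} e"
    have inj: "inj_on e {..<n}" and img: "e ` {..<n} = UNIV" using e unfolding n_def bij_betw_def by auto
    have idx1: "idx a < n" for a unfolding idx_def using img by (metis UNIV_I inv_into_into lessThan_iff)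
    have idx2: "e (idx a) = a" for a unfolding idx_def using img by (simp add: f_inv_into_f)
    have idx3: "idx (e j) = j" if "j < n" for j unfolding idx_def using inj that by (simp add: inv_into_f_f)
    define w :: "complex^'n" where "w = (\<chi> a. v $ idx a)"
    have vd: "dim_vec v = n" using v by auto
    have "(\<chi> i j. complex_of_real (matrix_inv R $ i $ j)) *v w = l *s w"
    proof -
      have "((\<chi> i j. complex_of_real (B $ i $ j)) *v w) $ a = (l *s w) $ a" for a
      proof -
        have "((\<chi> i j. complex_of_real (B $ i $ j)) *v w) $ a = (\<Sum>b\<in>UNIV. complex_of_real (B $ a $ b) * w $ b)"
          by (simp add: matrix_vector_mult_def)
        also have "\<dots> = (\<Sum>j<n. complex_of_real (B $ a $ e j) * w $ e j)"
          using sum.reindex_bij_betw[OF e, of "\<lambda>b. complex_of_real (B $ a $ b) * w $ b"] unfolding n_def by simp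
        also have "\<dots> = (\<Sum>j<n. Bc $$ (idx a, j) * v $ j)"
          by (rule sum.cong) (auto simp: Bc_def w_def idx1 idx2 idx3)
        also have "\<dots> = (Bc *\<^sub>v v) $ idx a"
          using idx1[of a] Bc vd by (simp add: scalar_prod_def lessThan_atLeast0 Bc_def)
        also have "\<dots> = l * v $ idx a" using v idx1[of a] vd by simp
        finally show ?thesis by (simp add: w_def)
      qed
      thus ?thesis unfolding B_def by (simp add: Finite_Cartesian_Product.vec_eq_iff)
    qed
    moreover have "w \<noteq> 0"
    proof
      assume w0: "w = 0"
      have "v = 0\<^sub>v n"
      proof (rule eq_vecI)
        fix j assume "j < dim_vec (0\<^sub>v n :: complex vec)"
        hence j: "j < n" by simp
        have "v $ j = w $ e j" using j by (simp add: w_def idx3)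
        thus "v $ j = 0\<^sub>v n $ j" using w0 j by simp
      qed (simp add: vd)
      thus False using v by simp
    qed
    ultimately show ?thesis by (rule eig_small[OF exp])
  qed
  obtain \<rho> c where r: "0 < \<rho>" "\<rho> < 1" and bnd: "\<And>k i j. i < n \<Longrightarrow> j < n \<Longrightarrow> norm ((Bc ^\<^sub>m k) $$ (i,j)) \<le> c * \<rho> ^ k"
  proof -
    have "\<exists>\<rho> c. 0 < \<rho> \<and> \<rho> < 1 \<and> (\<forall>k i j. i < n \<longrightarrow> j < n \<longrightarrow> norm ((Bc ^\<^sub>m k) $$ (i,j)) \<le> c * \<rho> ^ k)"
      by (rule jnf_power_decay[OF Bc n0]) (rule ev)
    thus ?thesis using that by blast
  qed
  have c1: "1 \<le> c" using bnd[of 0 0 0] n0 Bc by auto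
  show ?thesis
  proof (intro exI conjI allI)
    show "0 < real CARD('n) * real CARD('n) * c" using c1 by simp
    fix m x
    have "norm ((((*v) B) ^^ m) x) \<le> real CARD('n) * real CARD('n) * (c * \<rho> ^ m) * norm x"
      by (rule pow_bound_transfer[OF e]) (use bnd in \<open>auto simp: Bc_def n_def\<close>)
    thus "norm ((((*v) (matrix_inv R)) ^^ m) x) \<le> real CARD('n) * real CARD('n) * c * \<rho> ^ m * norm x"
      by (simp add: B_def mult.assoc)
  qed (use r in auto)
qed

lemma pow_small: "0 \<le> (x::real) \<Longrightarrow> x < 1 \<Longrightarrow> 0 < y \<Longrightarrow> \<exists>n. x ^ n < y"
proof -
  assume a: "0 \<le> x" "x < 1" "0 < y"
  have "(\<lambda>n. x ^ n) \<longlonglongrightarrow> 0" using a by (intro LIMSEQ_realpow_zero)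
  from order_tendstoD(2)[OF this a(3)] have "eventually (\<lambda>n. x ^ n < y) sequentially" .
  thus ?thesis by (meson eventually_sequentially order_refl)
qed

lemma word_map_Nil[simp]: "word_map R [] = id"
  by (simp add: word_map_def)

lemma word_map_Cons[simp]: "word_map R (b # w) = ifs_map R b \<circ> word_map R w"
  by (simp add: word_map_def)

lemma word_weight_Nil[simp]: "word_weight p [] = 1" by (simp add: word_weight_def)
lemma word_weight_Cons[simp]: "word_weight p (b # w) = p b * word_weight p w" by (simp add: word_weight_def)

lemma words_0: "words B 0 = {[]}" by (auto simp: words_def)

lemma words_Suc: "words B (Suc m) = (\<lambda>(b, w). b # w) ` (B \<times> words B m)"
  by (auto simp: words_def length_Suc_conv)

lemma finite_words: "finite B \<Longrightarrow> finite (words B m)"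
  unfolding words_def by (rule finite_lists_length_eq)

lemma sum_words_Suc:
  assumes "finite B"
  shows "(\<Sum>w\<in>words B (Suc m). f w) = (\<Sum>b\<in>B. \<Sum>w\<in>words B m. f (b # w))"
proof -
  have inj: "inj_on (\<lambda>(b, w). b # w) (B \<times> words B m)" by (auto simp: inj_on_def)
  have "(\<Sum>w\<in>words B (Suc m). f w) = (\<Sum>x\<in>B \<times> words B m. f (case x of (b, w) \<Rightarrow> b # w))"
    unfolding words_Suc by (subst sum.reindex[OF inj]) (simp add: comp_def)
  also have "\<dots> = (\<Sum>b\<in>B. \<Sum>w\<in>words B m. f (b # w))"
    by (simp add: sum.cartesian_product prod.case_distrib)
  finally show ?thesis .
qed

lemma sum_word_weight:
  assumes "finite B" "(\<Sum>b\<in>B. p b) = 1"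
  shows "(\<Sum>w\<in>words B m. word_weight p w) = 1"
proof (induction m)
  case 0 then show ?case by (simp add: words_0)
next
  case (Suc m)
  have "(\<Sum>w\<in>words B (Suc m). word_weight p w) = (\<Sum>b\<in>B. p b * (\<Sum>w\<in>words B m. word_weight p w))"
    using assms by (simp add: sum_words_Suc sum_distrib_left)
  thus ?case using Suc assms by simp
qed

lemma word_weight_pos:
  assumes "\<forall>b\<in>B. p b > 0" "w \<in> words B m"
  shows "word_weight p w > 0"
  using assms unfolding words_def word_weight_def
  by (induction w arbitrary: m) (auto intro!: mult_pos_pos)

lemma ifs_map_diff: "ifs_map R b x - ifs_map R b y = matrix_inv R *v (x - y)"
  by (simp add: ifs_map_def matrix_vector_right_distrib matrix_vector_mult_diff_distrib)

lemma word_map_diff: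
  "word_map R w x - word_map R w y = (((*v) (matrix_inv R)) ^^ length w) (x - y)"
  by (induction w) (simp_all add: ifs_map_diff)

lemma word_map_continuous: "continuous_on UNIV (word_map R w)"
proof (induction w)
  case Nil then show ?case by (simp add: continuous_on_id)
next
  case (Cons b w)
  have "continuous_on UNIV (ifs_map R b)"
  proof -
    have "continuous_on UNIV ((*v) (matrix_inv R))"
      by (rule linear_continuous_on[OF matrix_vector_mul_bounded_linear])
    moreover have "continuous_on UNIV (\<lambda>x::real^'a. x + b)" by (intro continuous_intros)
    ultimately have "continuous_on UNIV (\<lambda>x. matrix_inv R *v (x + b))"
      using continuous_on_compose2[of UNIV "(*v) (matrix_inv R)" UNIV "\<lambda>x. x + b"] by auto
    thus ?thesis by (simp add: ifs_map_def)
  qed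
  then show ?case using Cons by (simp add: continuous_on_compose2[of UNIV "ifs_map R b" UNIV])
qed

lemma word_map_borel: "word_map R w -` A \<in> sets borel" if "A \<in> sets borel"
  using measurable_sets_borel[OF borel_measurable_continuous_onI[OF word_map_continuous] that] .

lemma ifs_map_borel: "ifs_map R b -` A \<in> sets borel" if "A \<in> sets borel"
  using word_map_borel[OF that, of R "[b]"] by simp

lemma word_map_X:
  assumes "is_attractor R B X" "set w \<subseteq> B"
  shows "word_map R w ` X \<subseteq> X"
  using assms(2)
proof (induction w)
  case Nil then show ?case by simp
next
  case (Cons b w)
  have "ifs_map R b ` X \<subseteq> X" using assms(1) Cons.prems unfolding is_attractor_def by auto
  then show ?case using Cons by (auto simp: image_comp[symmetric])
qed

lemma measure_words:
  assumes inv: "is_invariant_measure R B p \<mu>" and fin: "finite B"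
  shows "A \<in> sets borel \<Longrightarrow> measure \<mu> A = (\<Sum>w\<in>words B m. word_weight p w * measure \<mu> (word_map R w -` A))"
proof (induction m arbitrary: A)
  case 0 then show ?case by (simp add: words_0)
next
  case (Suc m)
  have "measure \<mu> A = (\<Sum>b\<in>B. p b * measure \<mu> (ifs_map R b -` A))"
    using inv Suc.prems unfolding is_invariant_measure_def by blast
  also have "\<dots> = (\<Sum>b\<in>B. p b * (\<Sum>w\<in>words B m. word_weight p w * measure \<mu> (word_map R w -` (ifs_map R b -` A))))"
    using Suc.IH[OF ifs_map_borel[OF Suc.prems]] by simp
  also have "\<dots> = (\<Sum>b\<in>B. \<Sum>w\<in>words B m. word_weight p (b # w) * measure \<mu> (word_map R (b # w) -` A))"
    by (simp add: sum_distrib_left mult.assoc vimage_comp)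
  also have "\<dots> = (\<Sum>w\<in>words B (Suc m). word_weight p w * measure \<mu> (word_map R w -` A))"
    using fin by (simp add: sum_words_Suc)
  finally show ?case .
qed

lemma support:
  assumes inv: "is_invariant_measure R B p \<mu>" and fin: "finite B" and sum1: "(\<Sum>b\<in>B. p b) = 1"
    and pos: "\<forall>b\<in>B. p b > 0"
    and att: "is_attractor R B X"
    and K: "0 < K" "0 < \<rho>" "\<rho> < 1"
    and contr: "\<forall>m x. norm ((((*v) (matrix_inv R)) ^^ m) x) \<le> K * \<rho> ^ m * norm x"
  shows "A \<in> sets borel \<Longrightarrow> A \<inter> X = {} \<Longrightarrow> measure \<mu> A = 0"
proof -
  assume Ab: "A \<in> sets borel" and AX: "A \<inter> X = {}"
  have P: "prob_space \<mu>" and Sm: "sets \<mu> = sets borel" using inv by (auto simp: is_invariant_measure_def)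
  interpret prob_space \<mu> by (rule P)
  have Xne: "X \<noteq> {}" and Xc: "closed X" using att compact_imp_closed by (auto simp: is_attractor_def)
  define S where "S t = {y. t \<le> infdist y X}" for t
  have Sb: "S t \<in> sets borel" for t
  proof -
    have "closed (S t)" unfolding S_def
      by (intro closed_Collect_le continuous_intros)
    thus ?thesis by (rule borel_closed)
  qed
  hence Sm': "S t \<in> sets \<mu>" for t using Sm by simp
  have lip: "infdist (word_map R w y) X \<le> K * \<rho> ^ (length w) * infdist y X" if w: "set w \<subseteq> B" for w y
  proof -
    define c where "c = K * \<rho> ^ (length w)"
    have c: "c > 0" using K by (simp add: c_def)
    have "infdist (word_map R w y) X / c \<le> dist y x" if x: "x \<in> X" for x
    proof -
      have "word_map R w x \<in> X" using word_map_X[OF att w] x by auto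
      hence "infdist (word_map R w y) X \<le> dist (word_map R w y) (word_map R w x)" by (rule infdist_le)
      also have "\<dots> = norm ((((*v) (matrix_inv R)) ^^ length w) (y - x))"
        by (simp add: dist_norm word_map_diff)
      also have "\<dots> \<le> c * dist y x" using contr by (simp add: c_def dist_norm)
      finally show ?thesis using c by (simp add: pos_divide_le_eq mult.commute)
    qed
    hence "infdist (word_map R w y) X / c \<le> infdist y X"
      unfolding infdist_notempty[OF Xne] by (intro cINF_greatest Xne) auto
    thus ?thesis using c by (simp add: pos_divide_le_eq mult.commute c_def)
  qed
  have step: "measure \<mu> (S \<delta>) \<le> measure \<mu> (S (\<delta> / (K * \<rho> ^ m)))" for \<delta> m
  proof -
    have c: "K * \<rho> ^ m > 0" using K by simp
    have sub: "word_map R w -` S \<delta> \<subseteq> S (\<delta> / (K * \<rho> ^ m))" if w: "w \<in> words B m" for w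
    proof
      fix y assume "y \<in> word_map R w -` S \<delta>"
      hence "\<delta> \<le> infdist (word_map R w y) X" by (simp add: S_def)
      also have "\<dots> \<le> K * \<rho> ^ m * infdist y X" using lip[of w y] w by (simp add: words_def)
      finally show "y \<in> S (\<delta> / (K * \<rho> ^ m))" using c by (simp add: S_def pos_divide_le_eq mult.commute)
    qed
    have "measure \<mu> (S \<delta>) = (\<Sum>w\<in>words B m. word_weight p w * measure \<mu> (word_map R w -` S \<delta>))"
      by (rule measure_words[OF inv fin Sb])
    also have "\<dots> \<le> (\<Sum>w\<in>words B m. word_weight p w * measure \<mu> (S (\<delta> / (K * \<rho> ^ m))))"
    proof (rule sum_mono)
      fix w assume w: "w \<in> words B m"
      have "measure \<mu> (word_map R w -` S \<delta>) \<le> measure \<mu> (S (\<delta> / (K * \<rho> ^ m)))"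
        by (rule finite_measure_mono[OF sub[OF w] Sm'])
      moreover have "word_weight p w \<ge> 0" using word_weight_pos[OF pos w] by simp
      ultimately show "word_weight p w * measure \<mu> (word_map R w -` S \<delta>) \<le> word_weight p w * measure \<mu> (S (\<delta> / (K * \<rho> ^ m)))"
        by (rule mult_left_mono)
    qed
    also have "\<dots> = measure \<mu> (S (\<delta> / (K * \<rho> ^ m)))"
      using sum_word_weight[OF fin sum1, of m] by (simp add: sum_distrib_right[symmetric])
    finally show ?thesis .
  qed
  have anti: "S t' \<subseteq> S t" if "t \<le> t'" for t t' using that by (auto simp: S_def)
  have lim: "(\<lambda>j. measure \<mu> (S (real j))) \<longlonglongrightarrow> 0"
  proof -
    have "(\<lambda>j. measure \<mu> (S (real j))) \<longlonglongrightarrow> measure \<mu> (\<Inter>j. S (real j))"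
      by (rule finite_Lim_measure_decseq) (auto simp: Sm' decseq_def intro!: anti)
    moreover have "(\<Inter>j. S (real j)) = {}"
    proof -
      have "y \<notin> (\<Inter>j. S (real j))" for y
      proof -
        obtain j :: nat where "infdist y X < real j" using reals_Archimedean2 by blast
        thus ?thesis by (auto simp: S_def not_le)
      qed
      thus ?thesis by blast
    qed
    ultimately show ?thesis by simp
  qed
  have zero: "measure \<mu> (S \<delta>) = 0" if d: "\<delta> > 0" for \<delta>
  proof (rule ccontr)
    assume ne: "measure \<mu> (S \<delta>) \<noteq> 0"
    hence eps: "measure \<mu> (S \<delta>) > 0" using measure_nonneg[of \<mu> "S \<delta>"] by linarith
    from order_tendstoD(2)[OF lim eps] obtain J where J: "\<And>j. j \<ge> J \<Longrightarrow> measure \<mu> (S (real j)) < measure \<mu> (S \<delta>)"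
      by (auto simp: eventually_sequentially)
    obtain m where m: "\<rho> ^ m < \<delta> / (K * (real J + 1))"
      using pow_small[of \<rho> "\<delta> / (K * (real J + 1))"] K d by auto
    have pK: "K * (real J + 1) > 0" using K by simp
    have d1: "\<rho> ^ m * (K * (real J + 1)) < \<delta>" using m pos_less_divide_eq[OF pK] by blast
    have "K * \<rho> ^ m * (real J + 1) < \<delta>" using d1 by (simp add: mult_ac)
    hence "K * \<rho> ^ m < \<delta> / (real J + 1)" using pos_less_divide_eq[of "real J + 1"] by simp
    hence "real J + 1 < \<delta> / (K * \<rho> ^ m)" using K d by (simp add: field_simps)
    hence "S (\<delta> / (K * \<rho> ^ m)) \<subseteq> S (real J)" by (intro anti) simp
    hence "measure \<mu> (S (\<delta> / (K * \<rho> ^ m))) \<le> measure \<mu> (S (real J))" by (intro finite_measure_mono Sm')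
    with step[of \<delta> m] J[of J] show False by simp
  qed
  have "A \<subseteq> (\<Union>j. S (1 / Suc j))"
  proof
    fix y assume "y \<in> A"
    hence "y \<notin> X" using AX by auto
    hence "infdist y X > 0" by (rule infdist_pos_not_in_closed[OF Xc Xne])
    then obtain j where "inverse (real (Suc j)) < infdist y X" using reals_Archimedean by blast
    hence "y \<in> S (1 / Suc j)" unfolding S_def by (simp add: inverse_eq_divide)
    thus "y \<in> (\<Union>j. S (1 / Suc j))" by blast
  qed
  moreover have N: "(\<Union>j. S (1 / Suc j)) \<in> null_sets \<mu>"
  proof (rule null_sets_UN)
    fix j
    have "measure \<mu> (S (1 / Suc j)) = 0" by (rule zero) simp
    thus "S (1 / Suc j) \<in> null_sets \<mu>" using Sm'[of "1 / Suc j"] emeasure_eq_measure[of "S (1 / Suc j)"] by (simp add: null_sets_def)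
  qed
  ultimately have "A \<in> null_sets \<mu>" using null_sets_subset[OF N, of A] Ab Sm by blast
  thus ?thesis by (simp add: null_setsD1 measure_def)
qed

lemma funpow_lin_inj:
  fixes R :: "real^'n^'n"
  assumes "invertible R"
  shows "(((*v) (matrix_inv R)) ^^ m) z = 0 \<Longrightarrow> z = 0"
proof (induction m arbitrary: z)
  case 0 then show ?case by simp
next
  case (Suc m)
  have "(((*v) (matrix_inv R)) ^^ m) (matrix_inv R *v z) = 0" using Suc.prems by (simp add: funpow_Suc_right del: funpow.simps)
  hence "matrix_inv R *v z = 0" by (rule Suc.IH)
  hence "R *v (matrix_inv R *v z) = 0" by simp
  thus ?case using matrix_inv_props[OF assms] by (simp add: matrix_vector_mul_assoc)
qed

lemma word_map_inj:
  fixes R :: "real^'n^'n"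
  assumes "invertible R"
  shows "inj (word_map R w)"
proof (rule injI)
  fix x y assume "word_map R w x = word_map R w y"
  hence "(((*v) (matrix_inv R)) ^^ length w) (x - y) = 0" using word_map_diff[of R w x y] by simp
  hence "x - y = 0" by (rule funpow_lin_inj[OF assms])
  thus "x = y" by simp
qed

lemma funpow_continuous:
  fixes f :: "'a::topological_space \<Rightarrow> 'a"
  shows "continuous_on UNIV f \<Longrightarrow> continuous_on UNIV (f ^^ n)"
proof (induction n)
  case 0
  have "f ^^ 0 = id" by simp
  then show ?case using continuous_on_id' by metis
next
  case (Suc n)
  have "continuous_on UNIV (\<lambda>x. f ((f ^^ n) x))"
    using continuous_on_compose2[of UNIV f UNIV "f ^^ n"] Suc by auto
  then show ?case by (simp add: comp_def)
qed

lemma main_core: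
  fixes R :: "real^'n^'n" and B :: "(real^'n) set" and p :: "real^'n \<Rightarrow> real"
    and X :: "(real^'n) set" and \<mu> :: "(real^'n) measure"
    and k :: nat and tau :: "real^'n \<Rightarrow> real^'n"
  assumes invR: "invertible R"
    and fin: "finite B"
    and pos: "\<forall>b\<in>B. p b > 0"
    and sum1: "(\<Sum>b\<in>B. p b) = 1"
    and att: "is_attractor R B X"
    and inv: "is_invariant_measure R B p \<mu>"
    and tau: "tau \<in> maps_level R B k"
    and fpc: "fixed_point_condition R B X k tau"
    and K: "0 < K" "0 < \<rho>" "\<rho> < 1"
    and contr: "\<forall>m x. norm ((((*v) (matrix_inv R)) ^^ m) x) \<le> K * \<rho> ^ m * norm x"
  shows "\<exists>n0 C. \<forall>n\<ge>n0. measure \<mu> ((tau ^^ n) ` X) = C * (map_weight R B p k tau) ^ n"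
proof -
  have P: "prob_space \<mu>" and Sm: "sets \<mu> = sets borel" using inv by (auto simp: is_invariant_measure_def)
  interpret prob_space \<mu> by (rule P)
  have Xne: "X \<noteq> {}" and Xcp: "compact X" using att by (auto simp: is_attractor_def)
  obtain w0 where w0: "w0 \<in> words B k" "tau = word_map R w0" using tau unfolding maps_level_def by auto
  have lw0: "length w0 = k" "set w0 \<subseteq> B" using w0 by (auto simp: words_def)
  define pt where "pt = map_weight R B p k tau"
  have pt_pos: "pt > 0"
  proof -
    have "0 < (\<Sum>w\<in>{w \<in> words B k. word_map R w = tau}. word_weight p w)"
      by (rule sum_pos2[of _ w0]) (use w0 finite_words[OF fin] word_weight_pos[OF pos] in \<open>auto intro: less_imp_le\<close>)
    thus ?thesis by (simp add: pt_def map_weight_def)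
  qed
  show ?thesis
  proof (cases "k = 0")
    case True
    hence "w0 = []" using lw0 by simp
    hence tid: "tau = id" using w0 by simp
    have "{w \<in> words B k. word_map R w = tau} = {[]}" using True tid by (auto simp: words_0)
    hence "pt = 1" by (simp add: pt_def map_weight_def)
    have idn: "(id ^^ n) = (id :: real^'n \<Rightarrow> real^'n)" for n by (induction n) auto
    have "\<forall>n\<ge>0. measure \<mu> ((tau ^^ n) ` X) = measure \<mu> X * (map_weight R B p k tau) ^ n"
      using \<open>pt = 1\<close> tid idn unfolding pt_def by simp
    thus ?thesis by blast
  next
    case False
    hence k1: "k \<ge> 1" by simp
    define L where "L = (*v) (matrix_inv R)"
    define r where "r = \<rho> ^ k"
    have r: "0 < r" "r < 1" using K k1 by (auto simp: r_def power_less_one_iff)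
    have taudiff: "(tau ^^ n) x - (tau ^^ n) y = (L ^^ (k * n)) (x - y)" for n x y
    proof (induction n)
      case 0 then show ?case by simp
    next
      case (Suc n)
      have "(tau ^^ Suc n) x - (tau ^^ Suc n) y = (L ^^ k) ((tau ^^ n) x - (tau ^^ n) y)"
        using word_map_diff[of R w0] w0 lw0 by (simp add: L_def)
      also have "\<dots> = (L ^^ k) ((L ^^ (k * n)) (x - y))" using Suc by simp
      also have "\<dots> = (L ^^ (k * Suc n)) (x - y)" by (simp add: funpow_add)
      finally show ?case .
    qed
    have taulip: "norm ((tau ^^ n) x - (tau ^^ n) y) \<le> K * r ^ n * norm (x - y)" for n x y
      using taudiff[of n x y] contr[rule_format, of "k * n" "x - y"] unfolding L_def r_def by (simp add: power_mult)
    have tauX: "tau ` X \<subseteq> X" using word_map_X[OF att lw0(2)] w0 by simp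
    have taunX: "(tau ^^ n) ` X \<subseteq> X" for n
    proof (induction n)
      case 0 then show ?case by simp
    next
      case (Suc n) then show ?case using tauX by (auto simp: image_comp[symmetric])
    qed
    have tau_cont: "continuous_on UNIV tau" using w0 word_map_continuous by simp
    have injtau: "inj tau" using w0 word_map_inj[OF invR] by simp
    (* fixed point *)
    obtain N where N: "r ^ N < 1 / K" using pow_small[of r "1 / K"] r K by auto
    define c where "c = K * r ^ N"
    have c: "0 \<le> c" "c < 1" using N K r by (auto simp: c_def field_simps)
    have fN: "dist ((tau ^^ N) x) ((tau ^^ N) y) \<le> c * dist x y" for x y
      using taulip[of N x y] by (simp add: dist_norm c_def)
    obtain x0 where x0: "x0 \<in> X" "(tau ^^ N) x0 = x0" and uniq: "\<And>y. y \<in> X \<Longrightarrow> (tau ^^ N) y = y \<Longrightarrow> y = x0"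
      using Banach_fix[OF compact_imp_complete[OF Xcp] Xne c taunX fN] by blast
    have "tau x0 \<in> X" using tauX x0 by auto
    moreover have "(tau ^^ N) (tau x0) = tau x0" using x0 by (metis funpow_swap1)
    ultimately have fix0: "tau x0 = x0" using uniq by blast
    have fixn: "(tau ^^ n) x0 = x0" for n by (induction n) (simp_all add: fix0)
    have fp: "fixed_point tau = x0"
      unfolding fixed_point_def
    proof (rule the_equality)
      show "tau x0 = x0" by (rule fix0)
      fix y assume y: "tau y = y"
      have "(tau ^^ N) y = y" by (induction N) (simp_all add: y)
      hence "dist y x0 \<le> c * dist y x0" using fN[of y x0] fixn[of N] by simp
      hence "(1 - c) * dist y x0 \<le> 0" by (simp add: algebra_simps)
      hence "dist y x0 = 0" using c zero_le_dist[of y x0] mult_pos_pos[of "1 - c" "dist y x0"] by linarith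
      thus "y = x0" by simp
    qed
    (* bound *)
    obtain a where a: "\<And>x. x \<in> X \<Longrightarrow> norm x \<le> a" using compact_imp_bounded[OF Xcp] unfolding bounded_iff by blast
    define D where "D = a + norm x0"
    have D: "norm (x0 - x) \<le> D" if "x \<in> X" for x
      using a[OF that] norm_triangle_ineq4[of x0 x] unfolding D_def by linarith
    have D0: "0 \<le> D" using D[OF x0(1)] by simp
    (* other maps *)
    define Ot where "Ot = maps_level R B k - {tau}"
    have finOt: "finite Ot" unfolding Ot_def maps_level_def using finite_words[OF fin] by auto
    have dpos: "infdist x0 (\<sigma> ` X) > 0" if s: "\<sigma> \<in> Ot" for \<sigma>
    proof -
      obtain w where w: "w \<in> words B k" "\<sigma> = word_map R w" using s unfolding Ot_def maps_level_def by auto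
      have "compact (\<sigma> ` X)" using w word_map_continuous Xcp
        by (metis compact_continuous_image continuous_on_subset subset_UNIV)
      moreover have "x0 \<notin> \<sigma> ` X" using fpc s fp unfolding fixed_point_condition_def Ot_def by auto
      ultimately show ?thesis using Xne by (intro infdist_pos_not_in_closed) (auto intro: compact_imp_closed)
    qed
    define d where "d = Min (insert 1 ((\<lambda>\<sigma>. infdist x0 (\<sigma> ` X)) ` Ot))"
    have d0: "d > 0" unfolding d_def using finOt dpos by (subst Min_gr_iff) auto
    have dle: "d \<le> infdist x0 (\<sigma> ` X)" if "\<sigma> \<in> Ot" for \<sigma> unfolding d_def using finOt that by (intro Min_le) auto
    obtain n0 where n0: "r ^ n0 < d / (K * (D + 1))" using pow_small[of r "d / (K * (D + 1))"] r K D0 d0 by auto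
    have "K * r ^ n0 * (D + 1) < d"
    proof -
      have pK: "K * (D + 1) > 0" using K D0 by simp
      have "r ^ n0 * (K * (D + 1)) < d" using n0 pos_less_divide_eq[OF pK] by blast
      thus ?thesis by (simp add: mult_ac)
    qed
    hence Kn0: "K * r ^ n0 * D < d" using K r D0
      by (smt (verit, best) mult_left_mono mult_pos_pos zero_less_power)
    have disj: "(tau ^^ n) ` X \<inter> \<sigma> ` X = {}" if n: "n \<ge> n0" and s: "\<sigma> \<in> Ot" for n \<sigma>
    proof -
      have "z \<notin> \<sigma> ` X" if z: "z \<in> (tau ^^ n) ` X" for z
      proof
        assume zs: "z \<in> \<sigma> ` X"
        obtain x where x: "x \<in> X" "z = (tau ^^ n) x" using z by auto
        have "dist x0 z = norm ((tau ^^ n) x0 - (tau ^^ n) x)" using x fixn[of n] by (simp add: dist_norm)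
        also have "\<dots> \<le> K * r ^ n * norm (x0 - x)" by (rule taulip)
        also have "\<dots> \<le> K * r ^ n * D" using D[OF x(1)] K r by (intro mult_left_mono) auto
        also have "\<dots> \<le> K * r ^ n0 * D" using K r D0 n
          by (intro mult_right_mono mult_left_mono power_decreasing) auto
        also have "\<dots> < d" by (rule Kn0)
        also have "\<dots> \<le> infdist x0 (\<sigma> ` X)" by (rule dle[OF s])
        also have "\<dots> \<le> dist x0 z" by (rule infdist_le[OF zs])
        finally show False by simp
      qed
      thus ?thesis by blast
    qed
    (* recurrence *)
    have rec: "measure \<mu> ((tau ^^ Suc n) ` X) = pt * measure \<mu> ((tau ^^ n) ` X)" if n: "n \<ge> n0" for n
    proof -
      define A where "A = (tau ^^ Suc n) ` X"
      have Acp: "compact A" unfolding A_def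
        using funpow_continuous[OF tau_cont] Xcp by (metis compact_continuous_image continuous_on_subset subset_UNIV)
      have Ab: "A \<in> sets borel" by (rule borel_closed[OF compact_imp_closed[OF Acp]])
      define W where "W = words B k"
      define W1 where "W1 = {w \<in> W. word_map R w = tau}"
      have finW: "finite W" unfolding W_def by (rule finite_words[OF fin])
      have "measure \<mu> A = (\<Sum>w\<in>W. word_weight p w * measure \<mu> (word_map R w -` A))"
        unfolding W_def by (rule measure_words[OF inv fin Ab])
      also have "\<dots> = (\<Sum>w\<in>W1. word_weight p w * measure \<mu> (word_map R w -` A))
                    + (\<Sum>w\<in>W - W1. word_weight p w * measure \<mu> (word_map R w -` A))"
        using finW by (subst sum.union_disjoint[symmetric]) (auto simp: W1_def intro!: sum.cong)
      also have "(\<Sum>w\<in>W - W1. word_weight p w * measure \<mu> (word_map R w -` A)) = 0"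
      proof (rule sum.neutral, rule ballI)
        fix w assume w: "w \<in> W - W1"
        have sO: "word_map R w \<in> Ot" using w unfolding W1_def W_def Ot_def maps_level_def by auto
        have "word_map R w -` A \<inter> X = {}"
          using disj[OF _ sO, of "Suc n"] n unfolding A_def by auto
        hence "measure \<mu> (word_map R w -` A) = 0"
          by (intro support[OF inv fin sum1 pos att K contr] word_map_borel Ab)
        thus "word_weight p w * measure \<mu> (word_map R w -` A) = 0" by simp
      qed
      also have "(\<Sum>w\<in>W1. word_weight p w * measure \<mu> (word_map R w -` A))
                = (\<Sum>w\<in>W1. word_weight p w * measure \<mu> ((tau ^^ n) ` X))"
      proof (rule sum.cong)
        fix w assume "w \<in> W1"
        hence "word_map R w = tau" by (simp add: W1_def)
        moreover have "tau -` A = (tau ^^ n) ` X"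
        proof -
          have "A = tau ` ((tau ^^ n) ` X)" unfolding A_def by (simp add: image_image)
          thus ?thesis using inj_vimage_image_eq[OF injtau] by simp
        qed
        ultimately show "word_weight p w * measure \<mu> (word_map R w -` A) = word_weight p w * measure \<mu> ((tau ^^ n) ` X)"
          by simp
      qed simp
      also have "\<dots> = pt * measure \<mu> ((tau ^^ n) ` X)"
        by (simp add: pt_def map_weight_def W1_def W_def sum_distrib_right)
      finally show ?thesis unfolding A_def by simp
    qed
    define C where "C = measure \<mu> ((tau ^^ n0) ` X) / pt ^ n0"
    have "measure \<mu> ((tau ^^ n) ` X) = C * pt ^ n" if "n \<ge> n0" for n
      using that
    proof (induction n rule: dec_induct)
      case base then show ?case using pt_pos by (simp add: C_def)
    next
      case (step m)
      then show ?case using rec[OF step(1)] by simp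
    qed
    thus ?thesis unfolding pt_def by blast
  qed
qed

theorem proposition3p9:
  fixes R :: "real^'n^'n" and B :: "(real^'n) set" and p :: "real^'n \<Rightarrow> real"
    and X :: "(real^'n) set" and \<mu> :: "(real^'n) measure"
    and k :: nat and tau :: "real^'n \<Rightarrow> real^'n"
  assumes "expansive R"
    and "finite B"
    and "\<forall>b\<in>B. p b > 0"
    and "(\<Sum>b\<in>B. p b) = 1"
    and "is_attractor R B X"
    and "is_invariant_measure R B p \<mu>"
    and "tau \<in> maps_level R B k"
    and "fixed_point_condition R B X k tau"
  shows "\<exists>n0 C. \<forall>n\<ge>n0. measure \<mu> ((tau ^^ n) ` X) = C * (map_weight R B p k tau) ^ n"
  proof -
  obtain K \<rho> where K: "0 < K" "0 < \<rho>" "\<rho> < 1"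
    and contr: "\<forall>m x. norm ((((*v) (matrix_inv R)) ^^ m) x) \<le> K * \<rho> ^ m * norm x"
    using contraction[OF assms(1)] by blast
  show ?thesis
    by (rule main_core[OF expansive_invertible[OF assms(1)] assms(2-8) K contr])
qed

end
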